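(* There exists a constant $C>0$ such that for every $b\in(-1,1)$ and $r\in(0,1-|b|)$, \[ \left|\int_{\mathbb{R}^2_+\setminus B_r((b,0))}|\nabla u_b|^2dx-\pi\log\Big(\frac{2-2b^2}{r}\Big)\right|\le C\Big(\frac{|b|r}{1-b^2}+\frac{r^2}{(1-b^2-|b|r)^2}\Big). \] In particular $\lim_{r\searrow0}\big(\int_{\mathbb{R}^2_+\setminus B_r((b,0))}|\nabla u_b|^2dx-\pi\log\frac1r\big)=\pi\log(2-2b^2)$.
   Context: With $S=\{w\in\mathbb{C}:\operatorname{Re}w>0,0<\operatorname{Im}w<\pi\}$, $F(w)=-1/\cosh w$ (conformal bijection $S\to\mathbb{R}^2_+$, the upper half-plane), $u(z)=\frac\pi2-\operatorname{Im}F^{-1}(z)$, and $\Phi_b(z)=\frac{z+b}{1+bz}$, set $u_b=u\circ\Phi_{-b}$ for $b\in(-1,1)$. *)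

theory Defs
  imports "HOL-Analysis.Analysis"
begin

definition S_strip :: "complex set" where
  "S_strip = {w. Re w > 0 \<and> 0 < Im w \<and> Im w < pi}"

text \<open>Upper half-plane R^2_+ (identified with complex numbers with positive imaginary part).\<close>
definition upper_half :: "complex set" where
  "upper_half = {z. Im z > 0}"

text \<open>F(w) = -1/cosh w, a conformal bijection S -> upper half-plane.\<close>
definition F_map :: "complex \<Rightarrow> complex" where
  "F_map w = - 1 / cosh w"

definition u_fun :: "complex \<Rightarrow> real" where
  "u_fun z = pi / 2 - Im (inv_into S_strip F_map z)"

definition Phi :: "real \<Rightarrow> complex \<Rightarrow> complex" where
  "Phi b z = (z + complex_of_real b) / (1 + complex_of_real b * z)"

definition u_b :: "real \<Rightarrow> complex \<Rightarrow> real" where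
  "u_b b = u_fun \<circ> Phi (- b)"

text \<open>|grad f|^2 at z for a real function on R^2 = C (coordinates x = Re, y = Im):
  (d f/dx)^2 + (d f/dy)^2, via the Frechet derivative.\<close>
definition grad_sq :: "(complex \<Rightarrow> real) \<Rightarrow> complex \<Rightarrow> real" where
  "grad_sq f z = (frechet_derivative f (at z) 1)\<^sup>2 + (frechet_derivative f (at z) \<i>)\<^sup>2"

definition energy :: "real \<Rightarrow> real \<Rightarrow> real" where
  "energy b r = (LINT z : upper_half - ball (complex_of_real b) r | lborel. grad_sq (u_b b) z)"

end

theory Submission
  imports Defs "HOL-Complex_Analysis.Complex_Analysis"
begin


lemma Re_cosh_c: "Re (cosh z) = cosh (Re z) * cos (Im z)"
  by (simp add: cosh_def Re_exp Im_exp field_simps)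
lemma Im_cosh_c: "Im (cosh z) = sinh (Re z) * sin (Im z)"
  by (simp add: sinh_def cosh_def Re_exp Im_exp field_simps)

lemma norm_cosh_sq: "(cmod (cosh z))\<^sup>2 = (cosh (Re z))\<^sup>2 - (sin (Im z))\<^sup>2"
proof -
  have "(cmod (cosh z))\<^sup>2 = (cosh (Re z) * cos (Im z))\<^sup>2 + (sinh (Re z) * sin (Im z))\<^sup>2"
    by (simp add: cmod_power2 Re_cosh_c Im_cosh_c)
  also have "\<dots> = (cosh (Re z))\<^sup>2 - (sin (Im z))\<^sup>2"
    using cosh_square_eq[of "Re z"]
    by (simp add: power_mult_distrib cos_squared_eq algebra_simps)
  finally show ?thesis .
qed

lemma S_Im_cosh_pos: "w \<in> S_strip \<Longrightarrow> Im (cosh w) > 0"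
  unfolding S_strip_def Im_cosh_c by (auto intro!: mult_pos_pos sin_gt_zero)

lemma S_cosh_nz: "w \<in> S_strip \<Longrightarrow> cosh w \<noteq> 0"
  using S_Im_cosh_pos by force

lemma open_S: "open S_strip"
  unfolding S_strip_def
  by (intro open_Collect_conj open_halfspace_Re_gt open_halfspace_Im_gt open_halfspace_Im_lt)

lemma open_H: "open upper_half"
  unfolding upper_half_def by (rule open_halfspace_Im_gt)

lemma Im_neg_inv: "Im (- 1 / c) = Im c / (cmod c)\<^sup>2"
  by (simp add: Im_divide cmod_power2)

lemma Im_F: "Im (F_map w) = Im (cosh w) / (cmod (cosh w))\<^sup>2"
  by (simp add: F_map_def Im_divide cmod_power2)

lemma F_in_H: "w \<in> S_strip \<Longrightarrow> F_map w \<in> upper_half"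
  using S_Im_cosh_pos S_cosh_nz by (simp add: upper_half_def Im_F divide_pos_pos)



lemma aux_alg: "(p - 1) * q = (P - 1) * (P - p + q) \<Longrightarrow> (p - P) * (q + P - 1) = (0::real)"
  by (simp add: algebra_simps)

lemma cosh_inj_S:
  assumes w1: "w1 \<in> S_strip" and w2: "w2 \<in> S_strip" and eq: "cosh w1 = cosh w2"
  shows "w1 = w2"
proof -
  define x1 where "x1 = Re w1"
  define y1 where "y1 = Im w1"
  define x2 where "x2 = Re w2"
  define y2 where "y2 = Im w2"
  have x1: "x1 > 0" and y1: "0 < y1" "y1 < pi" and x2: "x2 > 0" and y2: "0 < y2" "y2 < pi"
    using w1 w2 by (auto simp: S_strip_def x1_def y1_def x2_def y2_def)
  have e1: "cosh x1 * cos y1 = cosh x2 * cos y2"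
    using arg_cong[OF eq, of Re] by (simp add: Re_cosh_c x1_def y1_def x2_def y2_def)
  have e2: "sinh x1 * sin y1 = sinh x2 * sin y2"
    using arg_cong[OF eq, of Im] by (simp add: Im_cosh_c x1_def y1_def x2_def y2_def)
  have N: "(cosh x1)\<^sup>2 - (sin y1)\<^sup>2 = (cosh x2)\<^sup>2 - (sin y2)\<^sup>2"
    unfolding x1_def y1_def x2_def y2_def
    using norm_cosh_sq[of w1] norm_cosh_sq[of w2] arg_cong[OF eq, of "\<lambda>z. (cmod z)\<^sup>2"] by linarith
  have E2: "((cosh x1)\<^sup>2 - 1) * (sin y1)\<^sup>2 = ((cosh x2)\<^sup>2 - 1) * (sin y2)\<^sup>2"
  proof -
    have "(sinh x1 * sin y1)\<^sup>2 = (sinh x2 * sin y2)\<^sup>2" using e2 by simp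
    then show ?thesis using cosh_square_eq[of x1] cosh_square_eq[of x2]
      by (simp add: power_mult_distrib)
  qed
  have s1: "(sin y1)\<^sup>2 > 0" using sin_gt_zero[OF y1] by simp
  have a2: "(cosh x2)\<^sup>2 > 1"
  proof -
    have "cosh x2 > 1" using x2 cosh_real_nonneg_less_iff[of 0 x2] by simp
    then have "cosh x2 * cosh x2 > 1 * 1" by (intro mult_strict_mono') auto
    then show ?thesis by (simp add: power2_eq_square)
  qed
  have fact: "((cosh x1)\<^sup>2 - (cosh x2)\<^sup>2) * ((sin y1)\<^sup>2 + (cosh x2)\<^sup>2 - 1) = 0"
  proof -
    have s2: "(sin y2)\<^sup>2 = (cosh x2)\<^sup>2 - (cosh x1)\<^sup>2 + (sin y1)\<^sup>2" using N by simp
    show ?thesis using E2 unfolding s2 by (rule aux_alg)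
  qed
  moreover have nz: "(sin y1)\<^sup>2 + (cosh x2)\<^sup>2 - 1 \<noteq> 0" using s1 a2 by linarith
  ultimately have "(cosh x1)\<^sup>2 - (cosh x2)\<^sup>2 = 0" by (simp only: mult_eq_0_iff) blast
  then have "(cosh x1)\<^sup>2 = (cosh x2)\<^sup>2" by linarith
  then have ca: "cosh x1 = cosh x2"
    by (rule power2_eq_imp_eq[OF _ less_imp_le[OF cosh_real_pos] less_imp_le[OF cosh_real_pos]])
  have "x1 \<le> x2" by (rule iffD1[OF cosh_real_nonneg_le_iff]) (use x1 x2 ca in auto)
  moreover have "x2 \<le> x1" by (rule iffD1[OF cosh_real_nonneg_le_iff]) (use x1 x2 ca in auto)
  ultimately have xx: "x1 = x2" by simp
  have cy: "cos y1 = cos y2" using e1 ca cosh_real_pos[of x2] by simp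
  have "y1 = y2" by (rule cos_inj_pi) (use y1 y2 cy in auto)
  then show ?thesis using xx by (simp add: x1_def y1_def x2_def y2_def complex_eq_iff)
qed

lemma inj_F: "inj_on F_map S_strip"
proof (rule inj_onI)
  fix w1 w2 assume a: "w1 \<in> S_strip" "w2 \<in> S_strip" "F_map w1 = F_map w2"
  then have "cosh w1 = cosh w2" using S_cosh_nz[of w1] S_cosh_nz[of w2]
    by (simp add: F_map_def field_simps)
  then show "w1 = w2" using a cosh_inj_S by blast
qed

lemma F_surj: assumes z: "z \<in> upper_half" shows "\<exists>w\<in>S_strip. F_map w = z"
proof -
  have zn: "z \<noteq> 0" using z by (auto simp: upper_half_def)
  define c where "c = - 1 / z"
  have imc: "Im c > 0" using z zn by (simp add: c_def Im_divide upper_half_def divide_pos_pos cmod_power2[symmetric])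
  define v where "v = Arccos c"
  have cv: "cos v = c" by (simp add: v_def)
  have rb: "-pi < Re v" "Re v \<le> pi" using Re_Arccos_bounds[of c] by (auto simp: v_def)
  have imcv: "sin (Re v) * (exp (- Im v) - exp (Im v)) / 2 > 0" using imc cv Im_cos[of v] by simp
  obtain v' where cv': "cos v' = c" and rv': "0 < Re v'" "Re v' < pi" and iv': "Im v' < 0"
  proof (cases "Re v > 0")
    case True
    have "Re v \<noteq> pi" using imcv by auto
    then have rl: "Re v < pi" using rb by simp
    then have "sin (Re v) > 0" using True by (intro sin_gt_zero)
    then have "exp (- Im v) > exp (Im v)" using imcv by (simp add: zero_less_mult_iff)
    then have "Im v < 0" by simp
    then show ?thesis using that[of v] cv True rl by simp
  next
    case False
    have "Re v \<noteq> 0" using imcv by auto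
    then have rl: "Re v < 0" using False by simp
    then have "sin (- Re v) > 0" using rb by (intro sin_gt_zero) auto
    then have "sin (Re v) < 0" by simp
    then have "exp (- Im v) < exp (Im v)" using imcv by (simp add: zero_less_mult_iff)
    then have "Im v > 0" by simp
    then show ?thesis using that[of "-v"] cv rl rb by simp
  qed
  define w where "w = \<i> * v'"
  have "cosh w = c" using cv' cos_conv_cosh[of "-v'"] by (simp add: w_def)
  then have "F_map w = z" using zn by (simp add: F_map_def c_def)
  moreover have "w \<in> S_strip" using rv' iv' by (simp add: S_strip_def w_def)
  ultimately show ?thesis by blast
qed

lemma F_image: "F_map ` S_strip = upper_half"
  using F_in_H F_surj by blast



abbreviation "Ginv \<equiv> inv_into S_strip F_map"

lemma F_holo: "F_map holomorphic_on S_strip"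
proof -
  have "(\<lambda>w. - 1 / cosh w) analytic_on S_strip" using S_cosh_nz
    by (intro analytic_intros) auto
  then show ?thesis unfolding F_map_def[abs_def] by (rule analytic_imp_holomorphic)
qed

lemma Ginv_holo: "Ginv holomorphic_on upper_half"
proof -
  obtain g where g: "g holomorphic_on (F_map ` S_strip)" "\<And>z. z \<in> S_strip \<Longrightarrow> g (F_map z) = z"
    using holomorphic_has_inverse[OF F_holo open_S inj_F] by metis
  show ?thesis
  proof (rule holomorphic_transform[of g])
    show "g holomorphic_on upper_half" using g(1) F_image by simp
    fix x assume "x \<in> upper_half"
    then obtain w where "w \<in> S_strip" "x = F_map w" using F_image by auto
    then show "g x = Ginv x" using g(2) inj_F by (simp add: inv_into_f_f)
  qed
qed

lemma Ginv_in_S: "z \<in> upper_half \<Longrightarrow> Ginv z \<in> S_strip"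
  using F_image by (metis inv_into_into)

lemma F_Ginv: "z \<in> upper_half \<Longrightarrow> F_map (Ginv z) = z"
  using F_image by (metis f_inv_into_f)

lemma Ginv_F: "w \<in> S_strip \<Longrightarrow> Ginv (F_map w) = w"
  using inj_F by (simp add: inv_into_f_f)

lemma mob_den_nz: assumes "\<bar>c\<bar> < 1" "z \<in> upper_half" shows "1 + complex_of_real c * z \<noteq> 0"
proof
  assume h: "1 + complex_of_real c * z = 0"
  then have "Im (1 + complex_of_real c * z) = 0" by simp
  then have "c * Im z = 0" by simp
  moreover have "Re (1 + complex_of_real c * z) = 0" using h by simp
  ultimately show False using assms by (auto simp: upper_half_def)
qed

lemma Im_Phi: "Im (Phi c z) = (1 - c\<^sup>2) * Im z / (cmod (1 + complex_of_real c * z))\<^sup>2"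
proof -
  have "Im (Phi c z) = (Im (z + c) * Re (1 + c * z) - Re (z + c) * Im (1 + c * z)) / ((Re (1 + c * z))\<^sup>2 + (Im (1 + c * z))\<^sup>2)"
    unfolding Phi_def by (simp only: Im_divide)
  also have "(Re (1 + c * z))\<^sup>2 + (Im (1 + c * z))\<^sup>2 = (cmod (1 + complex_of_real c * z))\<^sup>2"
    by (simp only: cmod_power2)
  also have "Im (z + c) * Re (1 + c * z) - Re (z + c) * Im (1 + c * z) = (1 - c\<^sup>2) * Im z"
    by (simp add: algebra_simps power2_eq_square)
  finally show ?thesis .
qed

lemma Phi_H: assumes "\<bar>c\<bar> < 1" "z \<in> upper_half" shows "Phi c z \<in> upper_half"
proof -
  have "c\<^sup>2 < 1" using assms(1) by (simp add: abs_square_less_1)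
  then show ?thesis using assms mob_den_nz[OF assms]
    by (auto simp: upper_half_def Im_Phi intro!: divide_pos_pos mult_pos_pos)
qed

lemma Phi_inv: assumes "\<bar>c\<bar> < 1" "z \<in> upper_half" shows "Phi (- c) (Phi c z) = z"
proof -
  have d: "1 + complex_of_real c * z \<noteq> 0" by (rule mob_den_nz[OF assms])
  have c2: "1 - (complex_of_real c)\<^sup>2 \<noteq> 0"
  proof
    assume "1 - (complex_of_real c)\<^sup>2 = 0"
    then have "(complex_of_real c)\<^sup>2 = complex_of_real 1" by simp
    then have "c\<^sup>2 = 1" by (metis of_real_eq_iff of_real_power)
    then show False using assms(1) by (simp add: abs_square_eq_1)
  qed
  define w where "w = Phi c z"
  have wD: "w * (1 + c * z) = z + c" using d by (simp add: w_def Phi_def)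
  have n: "(w - c) * (1 + c * z) = z * (1 - (complex_of_real c)\<^sup>2)"
    using wD by (simp add: algebra_simps power2_eq_square)
  have m: "(1 - c * w) * (1 + c * z) = 1 - (complex_of_real c)\<^sup>2"
  proof -
    have "(1 - c * w) * (1 + c * z) = (1 + c * z) - c * (w * (1 + c * z))" by (simp add: algebra_simps)
    also have "\<dots> = 1 - (complex_of_real c)\<^sup>2" unfolding wD by (simp add: algebra_simps power2_eq_square)
    finally show ?thesis .
  qed
  have "Phi (- c) w = (w - c) / (1 - c * w)" by (simp add: Phi_def)
  also have "\<dots> = ((w - c) * (1 + c * z)) / ((1 - c * w) * (1 + c * z))" using d by simp
  also have "\<dots> = z" unfolding n m using c2 by simp
  finally show ?thesis by (simp add: w_def)
qed



definition Psi :: "real \<Rightarrow> complex \<Rightarrow> complex" where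
  "Psi b z = Ginv (Phi (- b) z)"

lemma u_b_eq: "u_b b = (\<lambda>z. pi / 2 - Im (Psi b z))"
  by (simp add: fun_eq_iff u_b_def u_fun_def Psi_def)

lemma Phi_holo: assumes "\<bar>c\<bar> < 1" shows "Phi c holomorphic_on upper_half"
proof -
  have "(\<lambda>z. (z + complex_of_real c) / (1 + complex_of_real c * z)) holomorphic_on upper_half"
    using mob_den_nz[OF assms] by (intro holomorphic_intros) auto
  then show ?thesis by (simp add: Phi_def[abs_def])
qed

lemma Psi_holo: assumes "\<bar>b\<bar> < 1" shows "Psi b holomorphic_on upper_half"
proof -
  have "(Ginv \<circ> Phi (- b)) holomorphic_on upper_half"
    by (rule holomorphic_on_compose_gen[OF Phi_holo Ginv_holo]) (use assms Phi_H in auto)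
  then show ?thesis by (simp add: Psi_def[abs_def] o_def)
qed

lemma grad_u_b: assumes "\<bar>b\<bar> < 1" "z \<in> upper_half"
  shows "grad_sq (u_b b) z = (cmod (deriv (Psi b) z))\<^sup>2"
proof -
  define d where "d = deriv (Psi b) z"
  have "(Psi b has_field_derivative d) (at z)"
    unfolding d_def by (rule holomorphic_derivI[OF Psi_holo[OF assms(1)] open_H assms(2)])
  then have "(Psi b has_derivative (\<lambda>h. d * h)) (at z)" by (simp add: has_field_derivative_def)
  then have "((\<lambda>z. pi / 2 - Im (Psi b z)) has_derivative (\<lambda>h. 0 - Im (d * h))) (at z)"
    by (intro has_derivative_diff has_derivative_const has_derivative_Im)
  then have "(u_b b has_derivative (\<lambda>h. 0 - Im (d * h))) (at z)" by (simp add: u_b_eq)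
  then have fd: "frechet_derivative (u_b b) (at z) = (\<lambda>h. 0 - Im (d * h))"
    by (rule frechet_derivative_at[symmetric])
  show ?thesis unfolding grad_sq_def fd d_def[symmetric]
    by (simp add: cmod_power2)
qed

lemma Psi_in_S: assumes "\<bar>b\<bar> < 1" "z \<in> upper_half" shows "Psi b z \<in> S_strip"
  unfolding Psi_def using assms by (intro Ginv_in_S Phi_H) auto

lemma Psi_inj: assumes "\<bar>b\<bar> < 1" shows "inj_on (Psi b) upper_half"
proof (rule inj_onI)
  fix x y assume xy: "x \<in> upper_half" "y \<in> upper_half" "Psi b x = Psi b y"
  have hx: "Phi (- b) x \<in> upper_half" "Phi (- b) y \<in> upper_half" using Phi_H assms xy by auto
  have "Phi (- b) x = F_map (Psi b x)" using F_Ginv[OF hx(1)] by (simp add: Psi_def)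
  also have "\<dots> = F_map (Psi b y)" using xy(3) by (rule arg_cong)
  also have "\<dots> = Phi (- b) y" using F_Ginv[OF hx(2)] by (simp add: Psi_def)
  finally have "Phi (- b) x = Phi (- b) y" .
  then have "Phi b (Phi (- b) x) = Phi b (Phi (- b) y)" by simp
  moreover have "Phi b (Phi (- b) x) = x" using Phi_inv[of "- b" x] assms xy by simp
  moreover have "Phi b (Phi (- b) y) = y" using Phi_inv[of "- b" y] assms xy by simp
  ultimately show "x = y" by simp
qed



definition Aset :: "real \<Rightarrow> real \<Rightarrow> complex set" where
  "Aset b r = {w \<in> S_strip. Phi b (F_map w) \<notin> ball (complex_of_real b) r}"

lemma Psi_image: assumes "\<bar>b\<bar> < 1"
  shows "Psi b ` (upper_half - ball (complex_of_real b) r) = Aset b r"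
proof
  show "Psi b ` (upper_half - ball (complex_of_real b) r) \<subseteq> Aset b r"
  proof
    fix w assume "w \<in> Psi b ` (upper_half - ball (complex_of_real b) r)"
    then obtain z where z: "z \<in> upper_half" "z \<notin> ball (complex_of_real b) r" "w = Psi b z" by auto
    have h: "Phi (- b) z \<in> upper_half" using Phi_H assms z by auto
    have "F_map w = Phi (- b) z" using F_Ginv[OF h] z by (simp add: Psi_def)
    then have "Phi b (F_map w) = z" using Phi_inv[of "- b" z] assms z by simp
    moreover have "w \<in> S_strip" using Psi_in_S assms z by auto
    ultimately show "w \<in> Aset b r" using z by (simp add: Aset_def)
  qed
next
  show "Aset b r \<subseteq> Psi b ` (upper_half - ball (complex_of_real b) r)"
  proof
    fix w assume w: "w \<in> Aset b r"
    then have wS: "w \<in> S_strip" and nb: "Phi b (F_map w) \<notin> ball (complex_of_real b) r"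
      by (auto simp: Aset_def)
    define z where "z = Phi b (F_map w)"
    have zH: "z \<in> upper_half" using Phi_H F_in_H wS assms by (simp add: z_def)
    have "Psi b z = Ginv (Phi (- b) (Phi b (F_map w)))" by (simp add: Psi_def z_def)
    also have "Phi (- b) (Phi b (F_map w)) = F_map w" using Phi_inv F_in_H wS assms by simp
    also have "Ginv (F_map w) = w" using Ginv_F wS by simp
    finally have "Psi b z = w" .
    moreover have "z \<in> upper_half - ball (complex_of_real b) r" using zH nb by (simp add: z_def)
    ultimately show "w \<in> Psi b ` (upper_half - ball (complex_of_real b) r)" by (metis image_eqI)
  qed
qed

lemma Phi_minus: assumes "1 + complex_of_real b * z \<noteq> 0"
  shows "Phi b z - complex_of_real b = z * (1 - complex_of_real (b\<^sup>2)) / (1 + complex_of_real b * z)"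
  using assms by (simp add: Phi_def field_simps power2_eq_square)

lemma dist_Phi: assumes "\<bar>b\<bar> < 1" "z \<in> upper_half"
  shows "dist (complex_of_real b) (Phi b z) = cmod z * (1 - b\<^sup>2) / cmod (1 + complex_of_real b * z)"
proof -
  have d: "1 + complex_of_real b * z \<noteq> 0" by (rule mob_den_nz[OF assms])
  have q: "1 - b\<^sup>2 > 0" using assms(1) by (simp add: abs_square_less_1)
  have "dist (complex_of_real b) (Phi b z) = cmod (Phi b z - complex_of_real b)" by (simp add: dist_norm norm_minus_commute)
  also have "\<dots> = cmod z * cmod (complex_of_real (1 - b\<^sup>2)) / cmod (1 + complex_of_real b * z)"
    unfolding Phi_minus[OF d] by (simp add: norm_mult norm_divide)
  also have "cmod (complex_of_real (1 - b\<^sup>2)) = 1 - b\<^sup>2" using q by (metis norm_of_real abs_of_pos)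
  finally show ?thesis .
qed

lemma notin_ball_iff: assumes "\<bar>b\<bar> < 1" "z \<in> upper_half"
  shows "Phi b z \<notin> ball (complex_of_real b) r \<longleftrightarrow> r * cmod (1 + complex_of_real b * z) \<le> cmod z * (1 - b\<^sup>2)"
proof -
  have d: "cmod (1 + complex_of_real b * z) > 0" using mob_den_nz[OF assms] by simp
  show ?thesis using dist_Phi[OF assms] d by (simp add: not_less pos_le_divide_eq)
qed

lemma norm_den_bounds: "cmod (1 + complex_of_real b * z) \<le> 1 + \<bar>b\<bar> * cmod z"
     "1 - \<bar>b\<bar> * cmod z \<le> cmod (1 + complex_of_real b * z)"
proof -
  have "cmod (complex_of_real b * z) = \<bar>b\<bar> * cmod z" by (simp add: norm_mult)
  then show "cmod (1 + complex_of_real b * z) \<le> 1 + \<bar>b\<bar> * cmod z"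
    using norm_triangle_ineq[of 1 "complex_of_real b * z"] by simp
  show "1 - \<bar>b\<bar> * cmod z \<le> cmod (1 + complex_of_real b * z)"
    using norm_diff_ineq[of 1 "complex_of_real b * z"] \<open>cmod (complex_of_real b * z) = \<bar>b\<bar> * cmod z\<close>
    by simp
qed

lemma suff_notin: assumes b: "\<bar>b\<bar> < 1" and z: "z \<in> upper_half" and r: "0 < r"
  and pos: "1 - b\<^sup>2 - \<bar>b\<bar> * r > 0" and big: "cmod z \<ge> r / (1 - b\<^sup>2 - \<bar>b\<bar> * r)"
  shows "Phi b z \<notin> ball (complex_of_real b) r"
proof -
  have "r \<le> cmod z * (1 - b\<^sup>2 - \<bar>b\<bar> * r)" using big pos by (simp add: pos_divide_le_eq)
  then have "r * (1 + \<bar>b\<bar> * cmod z) \<le> cmod z * (1 - b\<^sup>2)" by (simp add: algebra_simps)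
  moreover have "r * cmod (1 + complex_of_real b * z) \<le> r * (1 + \<bar>b\<bar> * cmod z)"
    using norm_den_bounds(1) r by (simp add: mult_left_mono)
  ultimately show ?thesis unfolding notin_ball_iff[OF b z] by linarith
qed

lemma nec_notin: assumes b: "\<bar>b\<bar> < 1" and z: "z \<in> upper_half" and r: "0 < r"
  and nb: "Phi b z \<notin> ball (complex_of_real b) r"
  shows "cmod z \<ge> r / (1 - b\<^sup>2 + \<bar>b\<bar> * r)"
proof -
  have q: "1 - b\<^sup>2 > 0" using b by (simp add: abs_square_less_1)
  have "r * (1 - \<bar>b\<bar> * cmod z) \<le> r * cmod (1 + complex_of_real b * z)"
    using norm_den_bounds(2) r by (simp add: mult_left_mono)
  moreover have "r * cmod (1 + complex_of_real b * z) \<le> cmod z * (1 - b\<^sup>2)" using notin_ball_iff[OF b z] nb by blast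
  ultimately have "r * (1 - \<bar>b\<bar> * cmod z) \<le> cmod z * (1 - b\<^sup>2)" by linarith
  then have "r \<le> cmod z * (1 - b\<^sup>2 + \<bar>b\<bar> * r)" by (simp add: algebra_simps)
  moreover have "1 - b\<^sup>2 + \<bar>b\<bar> * r > 0" using q r by (simp add: add_pos_nonneg)
  ultimately show ?thesis by (simp add: pos_divide_le_eq)
qed



definition Xm :: "real \<Rightarrow> real" where "Xm s = ln (1 / s + sqrt (1 / s\<^sup>2 - 1))"
definition Xp :: "real \<Rightarrow> real" where "Xp s = ln (1 / s + sqrt (1 / s\<^sup>2 + 1))"

lemma cosh_Xm: assumes "0 < s" "s \<le> 1" shows "cosh (Xm s) = 1 / s" "Xm s \<ge> 0"
proof -
  define a where "a = 1 / s + sqrt (1 / s\<^sup>2 - 1)"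
  have s1: "1 / s \<ge> 1" using assms by simp
  have q: "1 / s\<^sup>2 - 1 \<ge> 0" using assms by (simp add: field_simps power_le_one)
  have sq: "(sqrt (1 / s\<^sup>2 - 1))\<^sup>2 = 1 / s\<^sup>2 - 1" using q by simp
  have a1: "a \<ge> 1" using s1 real_sqrt_ge_zero[OF q] unfolding a_def by linarith
  have "a * (1 / s - sqrt (1 / s\<^sup>2 - 1)) = (1/s)\<^sup>2 - (sqrt (1 / s\<^sup>2 - 1))\<^sup>2"
    by (simp add: a_def algebra_simps power2_eq_square)
  also have "\<dots> = 1" using sq by (simp add: power_divide)
  finally have inv: "inverse a = 1 / s - sqrt (1 / s\<^sup>2 - 1)" using a1 by (simp add: field_simps)
  show "cosh (Xm s) = 1 / s" unfolding Xm_def a_def[symmetric] using a1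
    by (simp add: cosh_ln_real inv) (simp add: a_def)
  show "Xm s \<ge> 0" unfolding Xm_def a_def[symmetric] using a1 by simp
qed

lemma cosh_Xp: assumes "0 < s" shows "cosh (Xp s) = sqrt (1 / s\<^sup>2 + 1)" "Xp s \<ge> 0"
proof -
  define a where "a = 1 / s + sqrt (1 / s\<^sup>2 + 1)"
  have sq: "(sqrt (1 / s\<^sup>2 + 1))\<^sup>2 = 1 / s\<^sup>2 + 1" by (simp add: add_nonneg_nonneg)
  have "sqrt (1 / s\<^sup>2 + 1) \<ge> 1" by simp
  moreover have "1 / s > 0" using assms by simp
  ultimately have a1: "a \<ge> 1" unfolding a_def by linarith
  have "a * (sqrt (1 / s\<^sup>2 + 1) - 1 / s) = (sqrt (1 / s\<^sup>2 + 1))\<^sup>2 - (1/s)\<^sup>2"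
    by (simp add: a_def algebra_simps power2_eq_square)
  also have "\<dots> = 1" using sq by (simp add: power_divide)
  finally have inv: "inverse a = sqrt (1 / s\<^sup>2 + 1) - 1 / s" using a1 by (simp add: field_simps)
  show "cosh (Xp s) = sqrt (1 / s\<^sup>2 + 1)" unfolding Xp_def a_def[symmetric] using a1
    by (simp add: cosh_ln_real inv) (simp add: a_def)
  show "Xp s \<ge> 0" unfolding Xp_def a_def[symmetric] using a1 by simp
qed

lemma mem_box_complex: "w \<in> box a b \<longleftrightarrow> Re a < Re w \<and> Re w < Re b \<and> Im a < Im w \<and> Im w < Im b"
  by (auto simp: mem_box Basis_complex_def)

lemma mem_cbox_complex: "w \<in> cbox a b \<longleftrightarrow> Re a \<le> Re w \<and> Re w \<le> Re b \<and> Im a \<le> Im w \<and> Im w \<le> Im b"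
  by (auto simp: mem_box Basis_complex_def)

lemma norm_F: "cmod (F_map w) = 1 / cmod (cosh w)"
  by (simp add: F_map_def norm_divide)

lemma box_sub_A:
  assumes b: "\<bar>b\<bar> < 1" and r: "0 < r" and pos: "1 - b\<^sup>2 - \<bar>b\<bar> * r > 0"
    and s1: "r / (1 - b\<^sup>2 - \<bar>b\<bar> * r) \<le> 1"
  shows "box 0 (Complex (Xm (r / (1 - b\<^sup>2 - \<bar>b\<bar> * r))) pi) \<subseteq> Aset b r"
proof
  define s where "s = r / (1 - b\<^sup>2 - \<bar>b\<bar> * r)"
  have s0: "0 < s" using r pos by (simp add: s_def)
  fix w assume "w \<in> box 0 (Complex (Xm (r / (1 - b\<^sup>2 - \<bar>b\<bar> * r))) pi)"
  then have w: "0 < Re w" "Re w < Xm s" "0 < Im w" "Im w < pi" by (auto simp: mem_box_complex s_def)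
  then have wS: "w \<in> S_strip" by (simp add: S_strip_def)
  have "cosh (Re w) < cosh (Xm s)" using w cosh_Xm[OF s0] s1
    by (subst cosh_real_nonneg_less_iff) (auto simp: s_def)
  then have c: "cosh (Re w) < 1 / s" using cosh_Xm[OF s0] s1 by (simp add: s_def)
  have "(cmod (cosh w))\<^sup>2 \<le> (cosh (Re w))\<^sup>2" by (simp add: norm_cosh_sq)
  also have "\<dots> < (1 / s)\<^sup>2" using c cosh_real_pos[of "Re w"] by (intro power_strict_mono) auto
  finally have "cmod (cosh w) < 1 / s" by (rule power2_less_imp_less) (use s0 in simp)
  then have "cmod (F_map w) > s" using S_cosh_nz[OF wS] s0 by (simp add: norm_F field_simps)
  then have "Phi b (F_map w) \<notin> ball (complex_of_real b) r"
    using suff_notin[OF b F_in_H[OF wS] r pos] by (simp add: s_def)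
  then show "w \<in> Aset b r" using wS by (simp add: Aset_def)
qed

lemma A_sub_cbox:
  assumes b: "\<bar>b\<bar> < 1" and r: "0 < r"
  shows "Aset b r \<subseteq> cbox 0 (Complex (Xp (r / (1 - b\<^sup>2 + \<bar>b\<bar> * r))) pi)"
proof
  define s where "s = r / (1 - b\<^sup>2 + \<bar>b\<bar> * r)"
  have q: "1 - b\<^sup>2 > 0" using b by (simp add: abs_square_less_1)
  have s0: "0 < s" using r q by (simp add: s_def add_pos_nonneg)
  fix w assume "w \<in> Aset b r"
  then have wS: "w \<in> S_strip" and nb: "Phi b (F_map w) \<notin> ball (complex_of_real b) r" by (auto simp: Aset_def)
  have "cmod (F_map w) \<ge> s" using nec_notin[OF b F_in_H[OF wS] r nb] by (simp add: s_def)
  then have cw: "cmod (cosh w) \<le> 1 / s" using S_cosh_nz[OF wS] s0 by (simp add: norm_F field_simps)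
  have "(cosh (Re w))\<^sup>2 = (cmod (cosh w))\<^sup>2 + (sin (Im w))\<^sup>2" by (simp add: norm_cosh_sq)
  also have "\<dots> \<le> (1 / s)\<^sup>2 + 1"
  proof -
    have "(sin (Im w))\<^sup>2 \<le> 1" using abs_sin_le_one[of "Im w"] by (simp add: abs_square_le_1)
    then show ?thesis using power_mono[OF cw norm_ge_zero, of 2] by linarith
  qed
  finally have "(cosh (Re w))\<^sup>2 \<le> 1 / s\<^sup>2 + 1" by (simp add: power_divide)
  then have "cosh (Re w) \<le> sqrt (1 / s\<^sup>2 + 1)" by (metis real_le_rsqrt)
  then have "cosh (Re w) \<le> cosh (Xp s)" using cosh_Xp[OF s0] by simp
  then have "Re w \<le> Xp s" using wS cosh_Xp[OF s0] by (subst (asm) cosh_real_nonneg_le_iff) (auto simp: S_strip_def)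
  then show "w \<in> cbox 0 (Complex (Xp (r / (1 - b\<^sup>2 + \<bar>b\<bar> * r))) pi)"
    using wS by (auto simp: mem_cbox_complex S_strip_def s_def)
qed

lemma measure_box_c: "X \<ge> 0 \<Longrightarrow> measure lborel (box 0 (Complex X pi)) = X * pi"
  by (simp add: measure_lborel_box_eq Basis_complex_def)

lemma measure_cbox_c: "X \<ge> 0 \<Longrightarrow> measure lborel (cbox 0 (Complex X pi)) = X * pi"
  by (simp add: measure_lborel_cbox_eq Basis_complex_def)



definition Lc :: "real^2 \<Rightarrow> complex" where "Lc v = Complex (v$1) (v$2)"
definition Li :: "complex \<Rightarrow> real^2" where "Li z = vector [Re z, Im z]"

lemma Lc_Li [simp]: "Lc (Li z) = z"
  by (simp add: Lc_def Li_def)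

lemma Li_Lc [simp]: "Li (Lc v) = v"
  by (simp add: Lc_def Li_def vec_eq_iff forall_2)

lemma Li_comp: "Li z $ 1 = Re z" "Li z $ 2 = Im z"
  by (simp_all add: Li_def)

lemma linear_Lc: "linear Lc"
  by (rule linearI) (simp_all add: Lc_def complex_eq_iff)

lemma linear_Li: "linear Li"
  by (rule linearI) (simp_all add: Li_def vec_eq_iff forall_2)

lemma bl_Lc: "bounded_linear Lc"
  using linear_Lc by (simp add: linear_conv_bounded_linear)

lemma bl_Li: "bounded_linear Li"
  using linear_Li by (simp add: linear_conv_bounded_linear)

lemma Lc_meas: "Lc \<in> borel_measurable borel"
  by (intro borel_measurable_continuous_onI linear_continuous_on bl_Lc)

lemma Lc_meas_lborel: "Lc \<in> measurable lborel borel"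
  using Lc_meas by simp

lemma Lc_preimage_box: "Lc -` box l u = box (Li l) (Li u)"
  by (auto simp: mem_box_cart mem_box_complex Lc_def Li_def forall_2)

lemma lborel_Lc: "lborel = distr lborel borel Lc"
proof (rule lborel_eqI)
  fix l u :: complex
  assume le: "\<And>b. b \<in> Basis \<Longrightarrow> l \<bullet> b \<le> u \<bullet> b"
  then have le1: "Re l \<le> Re u" and le2: "Im l \<le> Im u"
    using le[of 1] le[of \<i>] by (auto simp: Basis_complex_def)
  have "emeasure (distr lborel borel Lc) (box l u) = emeasure lborel (Lc -` box l u)"
    by (simp add: emeasure_distr Lc_meas)
  also have "\<dots> = emeasure lborel (box (Li l) (Li u))" by (simp add: Lc_preimage_box)
  also have "\<dots> = ennreal ((Re u - Re l) * (Im u - Im l))"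
  proof -
    have "\<forall>i. Li l $ i \<le> Li u $ i" using le1 le2 by (simp add: forall_2 Li_comp)
    then have "\<forall>b\<in>Basis. Li l \<bullet> b \<le> Li u \<bullet> b"
      by (auto simp: Basis_vec_def inner_axis)
    moreover have "(\<Prod>b\<in>Basis. (Li u - Li l) \<bullet> b) = (Re u - Re l) * (Im u - Im l)"
    proof -
      have "(\<Prod>b\<in>Basis. (Li u - Li l) \<bullet> b) = (\<Prod>i\<in>UNIV. (Li u - Li l) $ i)"
        by (simp add: Basis_vec_def cart_eq_inner_axis axis_eq_axis prod.UNION_disjoint)
      also have "\<dots> = (Re u - Re l) * (Im u - Im l)"
        by (simp add: UNIV_2 Li_comp)
      finally show ?thesis .
    qed
    ultimately show ?thesis by (simp add: emeasure_lborel_box_eq)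
  qed
  also have "\<dots> = (\<Prod>b\<in>Basis. (u - l) \<bullet> b)" by (simp add: Basis_complex_def)
  finally show "emeasure (distr lborel borel Lc) (box l u) = (\<Prod>b\<in>Basis. (u - l) \<bullet> b)" .
qed simp

lemma transfer_integrable:
  fixes f :: "complex \<Rightarrow> real"
  assumes "f \<in> borel_measurable borel"
  shows "integrable lborel f \<longleftrightarrow> integrable lborel (\<lambda>v. f (Lc v))"
    and "integral\<^sup>L lborel f = integral\<^sup>L lborel (\<lambda>v. f (Lc v))"
proof -
  show "integrable lborel f \<longleftrightarrow> integrable lborel (\<lambda>v. f (Lc v))"
    by (subst lborel_Lc, rule integrable_distr_eq[OF Lc_meas_lborel]) (use assms in simp)
  show "integral\<^sup>L lborel f = integral\<^sup>L lborel (\<lambda>v. f (Lc v))"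
    by (subst lborel_Lc, rule integral_distr[OF Lc_meas_lborel]) (use assms in simp)
qed

lemma transfer_measure:
  assumes "A \<in> sets borel"
  shows "measure lborel (Lc -` A) = measure lborel A"
proof -
  have "measure lborel A = measure (distr lborel borel Lc) A" by (subst lborel_Lc) simp
  also have "\<dots> = measure lborel (Lc -` A)" using assms by (simp add: measure_distr Lc_meas)
  finally show ?thesis by simp
qed

lemma transfer_emeasure:
  assumes "A \<in> sets borel"
  shows "emeasure lborel (Lc -` A) = emeasure lborel A"
proof -
  have "emeasure lborel A = emeasure (distr lborel borel Lc) A" by (subst lborel_Lc) simp
  also have "\<dots> = emeasure lborel (Lc -` A)" using assms by (simp add: emeasure_distr Lc_meas)
  finally show ?thesis by simp
qed



lemma Aset_borel: assumes b: "\<bar>b\<bar> < 1" shows "Aset b r \<in> sets borel"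
proof -
  define q where "q = (\<lambda>w. dist (complex_of_real b) (Phi b (F_map w)))"
  have cF: "continuous_on S_strip F_map" by (rule holomorphic_on_imp_continuous_on[OF F_holo])
  have cP: "continuous_on upper_half (Phi b)" by (rule holomorphic_on_imp_continuous_on[OF Phi_holo[OF b]])
  have "continuous_on S_strip (\<lambda>w. Phi b (F_map w))"
    by (rule continuous_on_compose2[OF cP cF]) (use F_in_H in auto)
  then have cq: "continuous_on S_strip q" unfolding q_def by (intro continuous_intros)
  have "closedin (top_of_set S_strip) (S_strip \<inter> q -` {r..})"
    by (rule continuous_closedin_preimage[OF cq]) simp
  then obtain T where T: "closed T" "S_strip \<inter> q -` {r..} = S_strip \<inter> T"
    by (auto simp: closedin_closed)
  have "Aset b r = S_strip \<inter> T"
    unfolding T(2)[symmetric] by (auto simp: Aset_def q_def not_less)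
  then show ?thesis using T(1) open_S by (simp add: borel_open borel_closed sets.Int)
qed

lemma Lc_preimage_cbox: "Lc -` cbox l u = cbox (Li l) (Li u)"
  by (auto simp: mem_box_cart mem_cbox_complex Lc_def Li_def forall_2)

lemma det_mult: "det (matrix (\<lambda>h. Li (d * Lc h))) = (cmod d)\<^sup>2"
proof -
  have a1: "Lc (axis 1 1) = 1" by (simp add: Lc_def axis_def complex_eq_iff)
  have a2: "Lc (axis 2 1) = \<i>" by (simp add: Lc_def axis_def complex_eq_iff)
  show ?thesis unfolding det_2
    by (simp add: matrix_def a1 a2 Li_comp cmod_power2 power2_eq_square flip: power2_eq_square)
qed



lemma energy_main:
  assumes b: "\<bar>b\<bar> < 1" and r: "0 < r"
  shows "set_integrable lborel (upper_half - ball (complex_of_real b) r) (grad_sq (u_b b))"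
    and "energy b r = measure lborel (Aset b r)"
proof -
  define Bs where "Bs = upper_half - ball (complex_of_real b) r"
  define Bv where "Bv = Lc -` Bs"
  define g where "g = (\<lambda>v. Li (Psi b (Lc v)))"
  define g' where "g' = (\<lambda>v h. Li (deriv (Psi b) (Lc v) * Lc h))"
  define h where "h = (\<lambda>z. (cmod (deriv (Psi b) z))\<^sup>2)"
  define A where "A = Aset b r"
  have BsH: "Bs \<subseteq> upper_half" by (auto simp: Bs_def)
  have Bs_borel: "Bs \<in> sets borel" unfolding Bs_def using open_H by (intro sets.Diff borel_open) auto
  have Bv_borel: "Bv \<in> sets borel" unfolding Bv_def using measurable_sets_borel[OF Lc_meas Bs_borel] .
  have Bv_leb: "Bv \<in> sets lebesgue" using Bv_borel by (intro sets_completionI_sets) simp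
  have der: "(g has_derivative g' v) (at v within Bv)" if v: "v \<in> Bv" for v
  proof -
    have vH: "Lc v \<in> upper_half" using v BsH by (auto simp: Bv_def)
    have "(Psi b has_field_derivative deriv (Psi b) (Lc v)) (at (Lc v))"
      by (rule holomorphic_derivI[OF Psi_holo[OF b] open_H vH])
    then have dP: "(Psi b has_derivative (\<lambda>h. deriv (Psi b) (Lc v) * h)) (at (Lc v))"
      by (simp add: has_field_derivative_def)
    have dL: "(Lc has_derivative Lc) (at v within Bv)" by (rule bounded_linear_imp_has_derivative[OF bl_Lc])
    have "((\<lambda>x. Psi b (Lc x)) has_derivative (\<lambda>x. deriv (Psi b) (Lc v) * Lc x)) (at v within Bv)"
      by (rule has_derivative_compose[OF dL dP])
    moreover have "(Li has_derivative Li) (at (Psi b (Lc v)))" by (rule bounded_linear_imp_has_derivative[OF bl_Li])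
    ultimately show ?thesis unfolding g_def g'_def by (rule has_derivative_compose)
  qed
  have inj: "inj_on g Bv"
  proof (rule inj_onI)
    fix x y assume xy: "x \<in> Bv" "y \<in> Bv" "g x = g y"
    then have "Lc (g x) = Lc (g y)" by simp
    then have "Psi b (Lc x) = Psi b (Lc y)" by (simp add: g_def)
    then have "Lc x = Lc y" using inj_onD[OF Psi_inj[OF b]] xy BsH by (auto simp: Bv_def)
    then have "Li (Lc x) = Li (Lc y)" by simp
    then show "x = y" by simp
  qed
  have img: "g ` Bv = Lc -` A"
  proof
    show "g ` Bv \<subseteq> Lc -` A"
    proof
      fix x assume "x \<in> g ` Bv"
      then obtain v where v: "v \<in> Bv" "x = g v" by auto
      have "Lc x = Psi b (Lc v)" by (simp add: v g_def)
      moreover have "Lc v \<in> Bs" using v by (simp add: Bv_def)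
      ultimately have "Lc x \<in> Psi b ` Bs" by simp
      then show "x \<in> Lc -` A" using Psi_image[OF b] by (simp add: A_def Bs_def)
    qed
  next
    show "Lc -` A \<subseteq> g ` Bv"
    proof
      fix x assume "x \<in> Lc -` A"
      then have "Lc x \<in> Psi b ` Bs" using Psi_image[OF b] by (simp add: A_def Bs_def)
      then obtain z where z: "z \<in> Bs" "Lc x = Psi b z" by auto
      have "Li z \<in> Bv" using z by (simp add: Bv_def)
      moreover have "g (Li z) = x" using z by (simp add: g_def flip: z(2))
      ultimately show "x \<in> g ` Bv" by (metis image_eqI)
    qed
  qed
  have A_borel: "A \<in> sets borel" unfolding A_def by (rule Aset_borel[OF b])
  have LA_borel: "Lc -` A \<in> sets borel" using measurable_sets_borel[OF Lc_meas A_borel] .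
  have LA_lmeas: "Lc -` A \<in> lmeasurable"
  proof (rule bounded_set_imp_lmeasurable)
    have "Lc -` A \<subseteq> Lc -` cbox 0 (Complex (Xp (r / (1 - b\<^sup>2 + \<bar>b\<bar> * r))) pi)"
      using A_sub_cbox[OF b r] by (auto simp: A_def)
    then show "bounded (Lc -` A)" unfolding Lc_preimage_cbox by (rule bounded_subset[OF bounded_cbox])
    show "Lc -` A \<in> sets lebesgue" using LA_borel by (intro sets_completionI_sets) simp
  qed
  define m where "m = measure lborel A"
  have m_eq: "measure lebesgue (Lc -` A) = m"
    using LA_borel by (simp add: measure_completion transfer_measure[OF A_borel] m_def)
  have "((\<lambda>x. \<bar>det (matrix (g' x))\<bar>) has_integral m) Bv"
    using has_measure_differentiable_image[OF Bv_leb der inj, of m] LA_lmeas m_eq img by simp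
  then have hint: "((\<lambda>v. h (Lc v)) has_integral m) Bv"
    by (simp add: g'_def det_mult h_def)
  then have habs: "(\<lambda>v. h (Lc v)) absolutely_integrable_on Bv"
    by (subst absolutely_integrable_on_iff_nonneg) (auto simp: h_def has_integral_integrable)
  have hLint: "(LINT v:Bv|lebesgue. h (Lc v)) = m"
    using set_lebesgue_integral_eq_integral(2)[OF habs] hint by (simp add: integral_unique)
  define F1 where "F1 = (\<lambda>z. indicator Bs z *\<^sub>R h z)"
  have cont_h: "continuous_on Bs h"
  proof -
    have "deriv (Psi b) holomorphic_on upper_half" by (rule holomorphic_deriv[OF Psi_holo[OF b] open_H])
    then have "continuous_on upper_half (deriv (Psi b))" by (rule holomorphic_on_imp_continuous_on)
    then have "continuous_on upper_half h" unfolding h_def by (intro continuous_intros)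
    then show ?thesis using BsH by (rule continuous_on_subset)
  qed
  have F1_meas: "F1 \<in> borel_measurable borel"
    unfolding F1_def by (rule borel_measurable_continuous_on_indicator[OF Bs_borel cont_h])
  have F1L: "(\<lambda>v. F1 (Lc v)) = (\<lambda>v. indicator Bv v *\<^sub>R h (Lc v))"
    by (auto simp: F1_def Bv_def indicator_def)
  have F1L_meas: "(\<lambda>v. F1 (Lc v)) \<in> borel_measurable lborel"
    using measurable_compose[OF Lc_meas F1_meas] by (simp add: o_def)
  have int_leb: "integrable lebesgue (\<lambda>v. F1 (Lc v))"
    using habs unfolding F1L set_integrable_def .
  have int_lb: "integrable lborel (\<lambda>v. F1 (Lc v))"
    using int_leb integrable_completion[OF F1L_meas] by simp
  have int_c: "integrable lborel F1" using transfer_integrable(1)[OF F1_meas] int_lb by simp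
  have grad_eq: "(\<lambda>z. indicator Bs z *\<^sub>R grad_sq (u_b b) z) = F1"
  proof
    fix z show "indicator Bs z *\<^sub>R grad_sq (u_b b) z = F1 z"
      using grad_u_b[OF b, of z] BsH by (cases "z \<in> Bs") (auto simp: F1_def h_def)
  qed
  show "set_integrable lborel (upper_half - ball (complex_of_real b) r) (grad_sq (u_b b))"
    unfolding set_integrable_def Bs_def[symmetric] grad_eq by (rule int_c)
  have "energy b r = integral\<^sup>L lborel F1"
    unfolding energy_def set_lebesgue_integral_def Bs_def[symmetric] grad_eq ..
  also have "\<dots> = integral\<^sup>L lborel (\<lambda>v. F1 (Lc v))" by (rule transfer_integrable(2)[OF F1_meas])
  also have "\<dots> = integral\<^sup>L lebesgue (\<lambda>v. F1 (Lc v))" by (rule integral_completion[OF F1L_meas, symmetric])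
  also have "\<dots> = (LINT v:Bv|lebesgue. h (Lc v))"
    unfolding F1L set_lebesgue_integral_def ..
  also have "\<dots> = m" by (rule hLint)
  finally show "energy b r = measure lborel (Aset b r)" by (simp add: m_def A_def)
qed



lemma ln_lower: fixes u :: real assumes "0 \<le> u" "u \<le> 1/2" shows "ln (1 - u) \<ge> - 2 * u"
proof -
  have "- u - 2 * u\<^sup>2 \<le> ln (1 - u)" by (rule ln_one_minus_pos_lower_bound) (use assms in auto)
  moreover have "u * u \<le> u * (1/2)" using assms by (intro mult_left_mono) auto
  ultimately show ?thesis by (simp add: power2_eq_square)
qed

lemma Xm_lower: assumes s: "0 < s" "s \<le> 1" shows "Xm s \<ge> ln (2 / s) - s\<^sup>2"
proof -
  have s2: "s\<^sup>2 \<le> 1" using s by (simp add: power_le_one)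
  have y: "0 \<le> 1 - s\<^sup>2" "1 - s\<^sup>2 \<le> 1" using s2 by auto
  have "((1 - s\<^sup>2) / s)\<^sup>2 \<le> 1 / s\<^sup>2 - 1"
  proof -
    have "(1 - s\<^sup>2)\<^sup>2 \<le> 1 - s\<^sup>2" using y by (simp add: power2_eq_square mult_left_le_one_le)
    then have "(1 - s\<^sup>2)\<^sup>2 / s\<^sup>2 \<le> (1 - s\<^sup>2) / s\<^sup>2" using s by (simp add: divide_right_mono)
    also have "(1 - s\<^sup>2) / s\<^sup>2 = 1 / s\<^sup>2 - 1" using s by (simp add: field_simps)
    finally show ?thesis by (simp add: power_divide)
  qed
  then have sq: "(1 - s\<^sup>2) / s \<le> sqrt (1 / s\<^sup>2 - 1)" by (rule real_le_rsqrt)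
  have arg: "(2 / s) * (1 - s\<^sup>2 / 2) \<le> 1 / s + sqrt (1 / s\<^sup>2 - 1)"
  proof -
    have "(2 / s) * (1 - s\<^sup>2 / 2) = 1 / s + (1 - s\<^sup>2) / s" using s by (simp add: field_simps power2_eq_square)
    then show ?thesis using sq by simp
  qed
  have pos: "0 < (2 / s) * (1 - s\<^sup>2 / 2)" using s s2 by (intro mult_pos_pos) auto
  have "ln (2 / s) + ln (1 - s\<^sup>2 / 2) = ln ((2 / s) * (1 - s\<^sup>2 / 2))"
    using s s2 by (subst ln_mult) auto
  also have "\<dots> \<le> Xm s" unfolding Xm_def using arg pos by (subst ln_le_cancel_iff) auto
  finally have "ln (2 / s) + ln (1 - s\<^sup>2 / 2) \<le> Xm s" .
  moreover have "ln (1 - s\<^sup>2 / 2) \<ge> - 2 * (s\<^sup>2 / 2)" by (rule ln_lower) (use s2 in auto)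
  ultimately show ?thesis by simp
qed

lemma Xp_upper: assumes s: "0 < s" shows "Xp s \<le> ln (2 / s) + s\<^sup>2"
proof -
  have sq: "sqrt (1 / s\<^sup>2 + 1) \<le> 1 / s + s / 2"
  proof -
    have "1 / s\<^sup>2 + 1 \<le> (1 / s + s / 2)\<^sup>2" using s by (simp add: power2_eq_square field_simps)
    then have "sqrt (1 / s\<^sup>2 + 1) \<le> sqrt ((1 / s + s / 2)\<^sup>2)" by (rule real_sqrt_le_mono)
    also have "\<dots> = 1 / s + s / 2" using s by simp
    finally show ?thesis .
  qed
  have arg: "1 / s + sqrt (1 / s\<^sup>2 + 1) \<le> (2 / s) * (1 + s\<^sup>2 / 4)"
  proof -
    have "(2 / s) * (1 + s\<^sup>2 / 4) = 1 / s + (1 / s + s / 2)" using s by (simp add: field_simps power2_eq_square)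
    then show ?thesis using sq by simp
  qed
  have pos: "0 < 1 / s + sqrt (1 / s\<^sup>2 + 1)" using s by (simp add: add_pos_nonneg)
  have "Xp s \<le> ln ((2 / s) * (1 + s\<^sup>2 / 4))" unfolding Xp_def using arg pos by (subst ln_le_cancel_iff) auto
  also have "\<dots> = ln (2 / s) + ln (1 + s\<^sup>2 / 4)"
  proof -
    have "1 + s\<^sup>2 / 4 > 0" by (simp add: add_pos_nonneg)
    then show ?thesis using s by (subst ln_mult) auto
  qed
  also have "ln (1 + s\<^sup>2 / 4) \<le> s\<^sup>2 / 4" by (rule ln_add_one_self_le_self) simp
  also have "s\<^sup>2 / 4 \<le> s\<^sup>2" by simp
  finally show ?thesis by simp
qed



lemma main_bound:
  assumes b1: "-1 < b" and b2: "b < 1" and r0: "0 < r" and r1: "r < 1 - \<bar>b\<bar>"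
  shows "\<bar>energy b r - pi * ln ((2 - 2 * b\<^sup>2) / r)\<bar>
          \<le> (2 * pi) * (\<bar>b\<bar> * r / (1 - b\<^sup>2) + r\<^sup>2 / (1 - b\<^sup>2 - \<bar>b\<bar> * r)\<^sup>2)"
proof -
  define \<beta> where "\<beta> = \<bar>b\<bar>"
  have b: "\<bar>b\<bar> < 1" using b1 b2 by auto
  have be: "0 \<le> \<beta>" "\<beta> < 1" using b by (auto simp: \<beta>_def)
  have bsq: "b\<^sup>2 = \<beta>\<^sup>2" by (simp add: \<beta>_def)
  define q where "q = 1 - b\<^sup>2"
  have qfac: "q = (1 - \<beta>) * (1 + \<beta>)" unfolding q_def bsq by (simp add: power2_eq_square algebra_simps)
  have q0: "q > 0" using be by (simp add: qfac)
  have br: "\<beta> * r \<le> \<beta> * (1 - \<beta>)" using r1 be by (intro mult_left_mono) (auto simp: \<beta>_def)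
  define qm where "qm = q - \<beta> * r"
  define qp where "qp = q + \<beta> * r"
  have qm0: "qm > 0" using br be by (simp add: qm_def qfac algebra_simps)
  have qp0: "qp > 0" using q0 be r0 by (simp add: qp_def add_pos_nonneg)
  have r_le_qm: "r \<le> qm"
  proof -
    have "r * (1 + \<beta>) \<le> (1 - \<beta>) * (1 + \<beta>)" using r1 be by (intro mult_right_mono) (auto simp: \<beta>_def)
    then show ?thesis by (simp add: qm_def qfac algebra_simps)
  qed
  define sp where "sp = r / qm"
  define sm where "sm = r / qp"
  have sp0: "0 < sp" "sp \<le> 1" using r0 qm0 r_le_qm by (auto simp: sp_def)
  have sm0: "0 < sm" using r0 qp0 by (simp add: sm_def)
  have sm_le: "sm \<le> sp" unfolding sm_def sp_def using r0 qm0 qp0 be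
    by (intro divide_left_mono) (auto simp: qm_def qp_def)
  define t where "t = \<beta> * r / q"
  have t0: "0 \<le> t" using be r0 q0 by (simp add: t_def)
  have t_half: "t \<le> 1/2"
  proof -
    have "2 * \<beta> * (1 - \<beta>) \<le> (1 + \<beta>) * (1 - \<beta>)" using be by (intro mult_right_mono) auto
    then have "2 * (\<beta> * r) \<le> q" using br by (simp add: qfac algebra_simps)
    then show ?thesis using q0 by (simp add: t_def field_simps)
  qed
  define L where "L = ln (2 * q / r)"
  have qm_t: "qm = q * (1 - t)" using q0 by (simp add: qm_def t_def field_simps)
  have qp_t: "qp = q * (1 + t)" using q0 by (simp add: qp_def t_def field_simps)
  have lnsp: "ln (2 / sp) = L + ln (1 - t)"
  proof -
    have eq: "2 / sp = (2 * q / r) * (1 - t)" using r0 qm0 by (simp add: sp_def qm_t field_simps)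
    have p1: "2 * q / r > 0" using q0 r0 by simp
    have p2: "1 - t > 0" using t_half by simp
    have "ln (2 / sp) = ln ((2 * q / r) * (1 - t))" by (simp only: eq)
    also have "\<dots> = ln (2 * q / r) + ln (1 - t)" using p1 p2 by (subst ln_mult) auto
    finally show ?thesis by (simp only: L_def)
  qed
  have lnsm: "ln (2 / sm) = L + ln (1 + t)"
  proof -
    have eq: "2 / sm = (2 * q / r) * (1 + t)" using r0 qp0 by (simp add: sm_def qp_t field_simps)
    have p1: "2 * q / r > 0" using q0 r0 by simp
    have p2: "1 + t > 0" using t0 by simp
    have "ln (2 / sm) = ln ((2 * q / r) * (1 + t))" by (simp only: eq)
    also have "\<dots> = ln (2 * q / r) + ln (1 + t)" using p1 p2 by (subst ln_mult) auto
    finally show ?thesis by (simp only: L_def)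
  qed
  have l1: "ln (1 - t) \<ge> - 2 * t" by (rule ln_lower[OF t0 t_half])
  have l2: "ln (1 + t) \<le> t" by (rule ln_add_one_self_le_self[OF t0])
  have sq_le: "sm\<^sup>2 \<le> sp\<^sup>2" using sm_le sm0 by (intro power_mono) auto
  have qmr: "1 - b\<^sup>2 - \<bar>b\<bar> * r = qm" by (simp add: qm_def q_def \<beta>_def)
  have qpr: "1 - b\<^sup>2 + \<bar>b\<bar> * r = qp" by (simp add: qp_def q_def \<beta>_def)
  have A_fm: "Aset b r \<in> fmeasurable lborel"
    by (rule fmeasurableI2[OF _ A_sub_cbox[OF b r0]]) (auto intro: Aset_borel[OF b])
  have E: "energy b r = measure lborel (Aset b r)" by (rule energy_main(2)[OF b r0])
  have lowE: "Xm sp * pi \<le> energy b r"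
  proof -
    have "box 0 (Complex (Xm sp) pi) \<subseteq> Aset b r"
      using box_sub_A[OF b r0] qm0 sp0 by (simp add: qmr sp_def)
    then have "measure lborel (box 0 (Complex (Xm sp) pi)) \<le> measure lborel (Aset b r)"
      by (intro measure_mono_fmeasurable A_fm) auto
    then show ?thesis using cosh_Xm(2)[OF sp0] by (simp add: measure_box_c E)
  qed
  have upE: "energy b r \<le> Xp sm * pi"
  proof -
    have "Aset b r \<subseteq> cbox 0 (Complex (Xp sm) pi)"
      using A_sub_cbox[OF b r0] by (simp add: qpr sm_def)
    then have "measure lborel (Aset b r) \<le> measure lborel (cbox 0 (Complex (Xp sm) pi))"
      by (intro measure_mono_fmeasurable) (auto intro: Aset_borel[OF b])
    then show ?thesis using cosh_Xp(2)[OF sm0] by (simp add: measure_cbox_c E)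
  qed
  have lo: "energy b r \<ge> pi * L - pi * (2 * t + sp\<^sup>2)"
  proof -
    have "Xm sp \<ge> L - 2 * t - sp\<^sup>2" using Xm_lower[OF sp0] lnsp l1 by linarith
    then have "pi * Xm sp \<ge> pi * (L - 2 * t - sp\<^sup>2)" by (intro mult_left_mono) auto
    then show ?thesis using lowE by (simp add: algebra_simps)
  qed
  have up: "energy b r \<le> pi * L + pi * (t + sp\<^sup>2)"
  proof -
    have "Xp sm \<le> L + t + sp\<^sup>2" using Xp_upper[OF sm0] lnsm l2 sq_le by linarith
    then have "pi * Xp sm \<le> pi * (L + t + sp\<^sup>2)" by (intro mult_left_mono) auto
    then show ?thesis using upE by (simp add: algebra_simps)
  qed
  have "\<bar>energy b r - pi * L\<bar> \<le> pi * (2 * t + sp\<^sup>2)"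
  proof -
    have pt: "0 \<le> pi * t" using t0 by simp
    have "energy b r - pi * L \<le> pi * (2 * t + sp\<^sup>2)" using up pt by (simp add: algebra_simps)
    moreover have "- (energy b r - pi * L) \<le> pi * (2 * t + sp\<^sup>2)" using lo by (simp add: algebra_simps)
    ultimately show ?thesis by (simp only: abs_le_iff)
  qed
  also have "\<dots> \<le> (2 * pi) * (t + sp\<^sup>2)" using t0 pi_gt_zero
    by (simp add: algebra_simps)
  finally have main: "\<bar>energy b r - pi * L\<bar> \<le> (2 * pi) * (t + sp\<^sup>2)" .
  have e1: "L = ln ((2 - 2 * b\<^sup>2) / r)" by (simp add: L_def q_def)
  have e2: "t = \<bar>b\<bar> * r / (1 - b\<^sup>2)" by (simp add: t_def \<beta>_def q_def)
  have e3: "sp\<^sup>2 = r\<^sup>2 / (1 - b\<^sup>2 - \<bar>b\<bar> * r)\<^sup>2" by (simp add: sp_def qmr power_divide)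
  show ?thesis using main unfolding e1 e2 e3 .
qed



theorem lemma2p7:
  shows "(\<exists>C>0. \<forall>b r. -1 < b \<and> b < 1 \<and> 0 < r \<and> r < 1 - \<bar>b\<bar> \<longrightarrow>
            set_integrable lborel (upper_half - ball (complex_of_real b) r) (grad_sq (u_b b)) \<and>
            \<bar>energy b r - pi * ln ((2 - 2 * b\<^sup>2) / r)\<bar>
              \<le> C * (\<bar>b\<bar> * r / (1 - b\<^sup>2) + r\<^sup>2 / (1 - b\<^sup>2 - \<bar>b\<bar> * r)\<^sup>2))
       \<and> (\<forall>b. -1 < b \<and> b < 1 \<longrightarrow>
            ((\<lambda>r. energy b r - pi * ln (1 / r)) \<longlongrightarrow> pi * ln (2 - 2 * b\<^sup>2)) (at_right 0))"
proof
  show "\<exists>C>0. \<forall>b r. -1 < b \<and> b < 1 \<and> 0 < r \<and> r < 1 - \<bar>b\<bar> \<longrightarrow>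
            set_integrable lborel (upper_half - ball (complex_of_real b) r) (grad_sq (u_b b)) \<and>
            \<bar>energy b r - pi * ln ((2 - 2 * b\<^sup>2) / r)\<bar>
              \<le> C * (\<bar>b\<bar> * r / (1 - b\<^sup>2) + r\<^sup>2 / (1 - b\<^sup>2 - \<bar>b\<bar> * r)\<^sup>2)"
  proof (intro exI[of _ "2 * pi"] conjI allI impI)
    show "0 < 2 * pi" by simp
    fix b r :: real assume h: "-1 < b \<and> b < 1 \<and> 0 < r \<and> r < 1 - \<bar>b\<bar>"
    then have b: "\<bar>b\<bar> < 1" by auto
    show "set_integrable lborel (upper_half - ball (complex_of_real b) r) (grad_sq (u_b b))"
      using energy_main(1)[OF b] h by simp
    show "\<bar>energy b r - pi * ln ((2 - 2 * b\<^sup>2) / r)\<bar>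
              \<le> 2 * pi * (\<bar>b\<bar> * r / (1 - b\<^sup>2) + r\<^sup>2 / (1 - b\<^sup>2 - \<bar>b\<bar> * r)\<^sup>2)"
      using main_bound h by blast
  qed
next
  show "\<forall>b. -1 < b \<and> b < 1 \<longrightarrow>
            ((\<lambda>r. energy b r - pi * ln (1 / r)) \<longlongrightarrow> pi * ln (2 - 2 * b\<^sup>2)) (at_right 0)"
  proof (intro allI impI)
    fix b :: real assume h: "-1 < b \<and> b < 1"
    then have b: "\<bar>b\<bar> < 1" by auto
    have q: "1 - b\<^sup>2 > 0" using b by (simp add: abs_square_less_1)
    define g where "g = (\<lambda>r. 2 * pi * (\<bar>b\<bar> * r / (1 - b\<^sup>2) + r\<^sup>2 / (1 - b\<^sup>2 - \<bar>b\<bar> * r)\<^sup>2))"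
    define f where "f = (\<lambda>r. energy b r - pi * ln ((2 - 2 * b\<^sup>2) / r))"
    have ev: "eventually (\<lambda>r. norm (f r) \<le> g r) (at_right 0)"
    proof -
      have "1 - \<bar>b\<bar> > 0" using b by simp
      moreover have "\<forall>r>0. r < 1 - \<bar>b\<bar> \<longrightarrow> norm (f r) \<le> g r"
        using main_bound h unfolding f_def g_def by auto
      ultimately show ?thesis unfolding eventually_at_right_field by (intro exI[of _ "1 - \<bar>b\<bar>"]) auto
    qed
    have "(g \<longlongrightarrow> 2 * pi * (\<bar>b\<bar> * 0 / (1 - b\<^sup>2) + 0\<^sup>2 / (1 - b\<^sup>2 - \<bar>b\<bar> * 0)\<^sup>2)) (at_right 0)"
      unfolding g_def using q by (intro tendsto_intros) auto
    then have g0: "(g \<longlongrightarrow> 0) (at_right 0)" by simp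
    have f0: "(f \<longlongrightarrow> 0) (at_right 0)" by (rule Lim_null_comparison[OF ev g0])
    then have "((\<lambda>r. f r + pi * ln (2 - 2 * b\<^sup>2)) \<longlongrightarrow> 0 + pi * ln (2 - 2 * b\<^sup>2)) (at_right 0)"
      by (intro tendsto_add tendsto_const)
    then have lim: "((\<lambda>r. f r + pi * ln (2 - 2 * b\<^sup>2)) \<longlongrightarrow> pi * ln (2 - 2 * b\<^sup>2)) (at_right 0)" by simp
    have "eventually (\<lambda>r. f r + pi * ln (2 - 2 * b\<^sup>2) = energy b r - pi * ln (1 / r)) (at_right 0)"
    proof -
      have "\<forall>r>0. r < 1 \<longrightarrow> f r + pi * ln (2 - 2 * b\<^sup>2) = energy b r - pi * ln (1 / r)"
      proof (intro allI impI)
        fix r :: real assume r: "r > 0"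
        have p: "2 - 2 * b\<^sup>2 > 0" using q by simp
        have A: "ln ((2 - 2 * b\<^sup>2) / r) = ln (2 - 2 * b\<^sup>2) - ln r" using p r by (simp add: ln_div)
        have B: "ln (1 / r) = - ln r" using r by (simp add: ln_div)
        show "f r + pi * ln (2 - 2 * b\<^sup>2) = energy b r - pi * ln (1 / r)"
          unfolding f_def A B by (simp add: algebra_simps)
      qed
      then show ?thesis unfolding eventually_at_right_field by (intro exI[of _ 1]) auto
    qed
    then show "((\<lambda>r. energy b r - pi * ln (1 / r)) \<longlongrightarrow> pi * ln (2 - 2 * b\<^sup>2)) (at_right 0)"
      using lim by (rule Lim_transform_eventually[rotated])
  qed
qed

end
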